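(* Let $\mathcal{H}$ be a finite-dimensional Hilbert space, $H$ a Hermitian operator (Hamiltonian) on $\mathcal{H}$ with at most three distinct eigenvalues, $\omega>0$, and $X,Y$ Hermitian operators on $\mathcal{H}$ such that the Heisenberg-picture operators $X(t)\coloneqq e^{iHt/\hbar}Xe^{-iHt/\hbar}$, $Y(t)\coloneqq e^{iHt/\hbar}Ye^{-iHt/\hbar}$ satisfy, for all real $t$, $$X(t)=\cos(\omega t)X+\sin(\omega t)Y,\qquad Y(t)=\cos(\omega t)Y-\sin(\omega t)X.$$ Then for every density operator $\rho$ on $\mathcal{H}$, $$\frac13\sum_{k=0}^2\operatorname{tr}\!\Big[\Theta\big(X(\tfrac{2\pi k}{3\omega})\big)\rho\Big]=\frac12.$$ In particular, this holds whenever $\dim\mathcal{H}\le 3$.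
   Context: For a Hermitian operator $A$, $\Theta(A)$ denotes the spectral function of $A$ with $\Theta(a)=1$ for $a>0$, $\Theta(a)=0$ for $a<0$, $\Theta(0)=1/2$. *)

theory Defs
  imports "Jordan_Normal_Form.Matrix" "Jordan_Normal_Form.Char_Poly"
begin

text \<open>Operators on an n-dimensional Hilbert space C^n are n x n complex matrices.\<close>

definition adj :: "complex mat \<Rightarrow> complex mat" where
  "adj A = mat (dim_col A) (dim_row A) (\<lambda>(i,j). cnj (A $$ (j,i)))"

definition hermitian :: "nat \<Rightarrow> complex mat \<Rightarrow> bool" where
  "hermitian n A \<longleftrightarrow> A \<in> carrier_mat n n \<and> adj A = A"

definition mtrace :: "complex mat \<Rightarrow> complex" where
  "mtrace A = (\<Sum>i<dim_row A. A $$ (i,i))"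

definition density_op :: "nat \<Rightarrow> complex mat \<Rightarrow> bool" where
  "density_op n \<rho> \<longleftrightarrow> hermitian n \<rho>
     \<and> (\<forall>v \<in> carrier_vec n. 0 \<le> Re (conjugate v \<bullet> (\<rho> *\<^sub>v v)))
     \<and> mtrace \<rho> = 1"

definition mexp :: "complex mat \<Rightarrow> complex mat" where
  "mexp M = mat (dim_row M) (dim_col M)
      (\<lambda>(i,j). (\<Sum>k. (M ^\<^sub>m k) $$ (i,j) / of_nat (fact k)))"

definition heis :: "real \<Rightarrow> complex mat \<Rightarrow> complex mat \<Rightarrow> real \<Rightarrow> complex mat" where
  "heis hbar H A t =
     mexp ((\<i> * complex_of_real (t / hbar)) \<cdot>\<^sub>m H) * A * mexp ((- \<i> * complex_of_real (t / hbar)) \<cdot>\<^sub>m H)"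

definition theta :: "real \<Rightarrow> real" where
  "theta a = (if a > 0 then 1 else if a < 0 then 0 else 1/2)"

text \<open>Spectral function Theta(A) of a Hermitian A: the operator acting on each
  eigenvector of A with eigenvalue lambda as multiplication by theta(lambda).
  (Hermitian matrices are diagonalizable, so this determines it uniquely.)\<close>
definition Theta :: "complex mat \<Rightarrow> complex mat" where
  "Theta A = (THE P. P \<in> carrier_mat (dim_row A) (dim_row A) \<and>
      (\<forall>v c. eigenvector A v c \<longrightarrow> P *\<^sub>v v = complex_of_real (theta (Re c)) \<cdot>\<^sub>v v))"

end

theory Submission
  imports Defs "Jordan_Normal_Form.Jordan_Normal_Form_Existence" "Jordan_Normal_Form.Jordan_Normal_Form_Uniqueness"
begin


lemma mv_index: assumes "A \<in> carrier_mat n m" "v \<in> carrier_vec m" "i < n"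
  shows "(A *\<^sub>v v) $ i = (\<Sum>j<m. A $$ (i,j) * v $ j)"
  using assms by (simp add: scalar_prod_def atLeast0LessThan)

lemma hermD: assumes "hermitian n A" "i < n" "j < n"
  shows "A $$ (i,j) = cnj (A $$ (j,i))"
proof -
  have A: "A \<in> carrier_mat n n" and e: "adj A = A" using assms(1) unfolding hermitian_def by auto
  have "A $$ (i,j) = adj A $$ (i,j)" using e by simp
  also have "\<dots> = cnj (A $$ (j,i))" using A assms(2,3) unfolding adj_def by auto
  finally show ?thesis .
qed

lemma hermD': assumes "hermitian n A" "i < n" "j < n"
  shows "cnj (A $$ (i,j)) = A $$ (j,i)"
  using hermD[OF assms(1) assms(3) assms(2)] by simp

lemma herm_quad_real: assumes "hermitian n A" "v \<in> carrier_vec n"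
  shows "cnj (\<Sum>i<n. cnj (v$i) * (A *\<^sub>v v) $ i) = (\<Sum>i<n. cnj (v$i) * (A *\<^sub>v v) $ i)"
proof -
  have A: "A \<in> carrier_mat n n" using assms unfolding hermitian_def by auto
  have "(\<Sum>i<n. cnj (v$i) * (A *\<^sub>v v) $ i) = (\<Sum>i<n. \<Sum>j<n. cnj (v$i) * A $$ (i,j) * v $ j)"
    using A assms(2) by (intro sum.cong refl) (simp add: mv_index[OF A assms(2)] sum_distrib_left mult.assoc del: index_mult_mat_vec)
  moreover have "cnj (\<Sum>i<n. \<Sum>j<n. cnj (v$i) * A $$ (i,j) * v $ j) = (\<Sum>i<n. \<Sum>j<n. v$i * A $$ (j,i) * cnj (v $ j))"
    by (simp add: hermD'[OF assms(1)])
  moreover have "\<dots> = (\<Sum>j<n. \<Sum>i<n. v$i * A $$ (j,i) * cnj (v $ j))"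
    by (rule sum.swap)
  moreover have "\<dots> = (\<Sum>i<n. \<Sum>j<n. cnj (v$i) * A $$ (i,j) * v $ j)"
    by (simp add: mult.commute mult.left_commute)
  ultimately show ?thesis by simp
qed

lemma norm_sq_sum: "(\<Sum>i<n. cnj (v$i) * v $ i) = complex_of_real (\<Sum>i<n. (cmod (v$i))^2)"
proof -
  have e: "\<And>z. cnj z * z = complex_of_real ((cmod z)^2)"
    by (metis complex_norm_square mult.commute of_real_power)
  show ?thesis by (simp only: e of_real_sum)
qed

lemma vec_zero_if_norm: assumes "v \<in> carrier_vec n" "(\<Sum>i<n. cnj (v$i) * v $ i) = 0"
  shows "v = 0\<^sub>v n"
proof -
  have "complex_of_real (\<Sum>i<n. (cmod (v$i))^2) = 0" using assms(2) norm_sq_sum[where n=n and v=v] by simp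
  hence "(\<Sum>i<n. (cmod (v$i))^2) = 0" by (simp only: of_real_eq_0_iff)
  hence "\<forall>i\<in>{..<n}. (cmod (v$i))^2 = 0" by (subst sum_nonneg_eq_0_iff[symmetric]) auto
  thus ?thesis using assms(1) by (intro eq_vecI) auto
qed

lemma herm_eigen_real: assumes "hermitian n A" "v \<in> carrier_vec n" "v \<noteq> 0\<^sub>v n" "A *\<^sub>v v = c \<cdot>\<^sub>v v"
  shows "Im c = 0"
proof -
  let ?q = "\<Sum>i<n. cnj (v$i) * (A *\<^sub>v v) $ i"
  let ?N = "\<Sum>i<n. (cmod (v$i))^2"
  have q: "?q = c * complex_of_real ?N"
    using assms(2,4) by (simp add: sum_distrib_left norm_sq_sum[symmetric] mult.commute mult.left_commute del: of_real_sum)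
  have N: "?N > 0"
  proof (rule ccontr)
    assume "\<not> ?N > 0"
    moreover have "?N \<ge> 0" by (intro sum_nonneg) simp
    ultimately have "?N = 0" by linarith
    hence "(\<Sum>i<n. cnj (v$i) * v $ i) = 0" using norm_sq_sum[where n=n and v=v] by simp
    thus False using vec_zero_if_norm assms(2,3) by blast
  qed
  have "cnj ?q = ?q" by (rule herm_quad_real[OF assms(1,2)])
  hence "cnj c * complex_of_real ?N = c * complex_of_real ?N" unfolding q by simp
  hence "(cnj c - c) * complex_of_real ?N = 0" by (simp add: algebra_simps)
  hence "cnj c = c" using N by (simp del: of_real_sum)
  thus ?thesis by (metis Reals_cnj_iff complex_is_Real_iff)
qed

lemma herm_sq_kernel: assumes "hermitian n C" "v \<in> carrier_vec n" "C *\<^sub>v (C *\<^sub>v v) = 0\<^sub>v n"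
  shows "C *\<^sub>v v = 0\<^sub>v n"
proof -
  have C: "C \<in> carrier_mat n n" using assms unfolding hermitian_def by auto
  define w where "w = C *\<^sub>v v"
  have w: "w \<in> carrier_vec n" using C assms(2) w_def by simp
  have Cw: "\<And>j. j < n \<Longrightarrow> (\<Sum>i<n. C $$ (j,i) * w $ i) = 0"
    using assms(3) C w unfolding w_def[symmetric] by (metis index_zero_vec(1) mv_index)
  have "(\<Sum>i<n. cnj (w$i) * w $ i) = (\<Sum>i<n. \<Sum>j<n. cnj (w$i) * C $$ (i,j) * v $ j)"
    using C assms(2) unfolding w_def by (intro sum.cong refl) (simp add: mv_index[OF C assms(2)] sum_distrib_left mult.assoc del: index_mult_mat_vec)
  also have "\<dots> = (\<Sum>j<n. \<Sum>i<n. cnj (w$i) * C $$ (i,j) * v $ j)" by (rule sum.swap)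
  also have "\<dots> = (\<Sum>j<n. cnj (\<Sum>i<n. C $$ (j,i) * w $ i) * v $ j)"
    by (intro sum.cong refl, simp add: sum_distrib_right sum_distrib_left hermD'[OF assms(1)] mult.commute)
  also have "\<dots> = 0" using Cw by simp
  finally have "w = 0\<^sub>v n" using vec_zero_if_norm w by blast
  thus ?thesis unfolding w_def .
qed

lemma char_matrix_herm: assumes "hermitian n A" "Im e = 0"
  shows "hermitian n (char_matrix A e)"
proof -
  have A: "A \<in> carrier_mat n n" using assms unfolding hermitian_def by auto
  have "cnj e = e" using assms(2) by (simp add: complex_eq_iff)
  thus ?thesis using A unfolding hermitian_def adj_def char_matrix_def
    by (auto intro!: eq_matI simp: hermD'[OF assms(1)])
qed



definition diagm :: "nat \<Rightarrow> (nat \<Rightarrow> complex) \<Rightarrow> complex mat" where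
  "diagm n d = mat n n (\<lambda>(i,j). if i = j then d i else 0)"

lemma diagm_carrier[simp]: "diagm n d \<in> carrier_mat n n" "dim_row (diagm n d) = n" "dim_col (diagm n d) = n"
  unfolding diagm_def by auto

lemma diagm_index[simp]: "i < n \<Longrightarrow> j < n \<Longrightarrow> diagm n d $$ (i,j) = (if i = j then d i else 0)"
  unfolding diagm_def by auto

lemma jm_diag: "(\<forall>(k,e)\<in>set n_as. k = 1) \<Longrightarrow> jordan_matrix n_as = diagm (length n_as) (\<lambda>i. snd (n_as ! i))"
proof (induct n_as)
  case Nil
  show ?case unfolding jordan_matrix_def by (intro eq_matI, auto)
next
  case (Cons ka rest)
  obtain a where ka: "ka = (1,a)" using Cons(2) by (cases ka) auto
  have IH: "jordan_matrix rest = diagm (length rest) (\<lambda>i. snd (rest ! i))" using Cons by auto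
  have e: "jordan_matrix ((1,a) # rest) = four_block_mat (jordan_block 1 a) (0\<^sub>m 1 (length rest)) (0\<^sub>m (length rest) 1) (jordan_matrix rest)"
    unfolding jordan_matrix_def by (simp add: Let_def jordan_matrix_def[symmetric] IH)
  show ?case unfolding ka e IH
    by (intro eq_matI) (auto simp: nth_Cons')
qed

lemma sum_list_eq_le: fixes f g :: "'b \<Rightarrow> nat"
  shows "(\<forall>x\<in>set xs. f x \<le> g x) \<Longrightarrow> sum_list (map f xs) = sum_list (map g xs) \<Longrightarrow> \<forall>x\<in>set xs. f x = g x"
proof (induct xs)
  case (Cons y ys)
  have "sum_list (map f ys) \<le> sum_list (map g ys)" using Cons(2) by (intro sum_list_mono) auto
  with Cons show ?case by auto
qed simp

lemma kernel_dim_eq: "mat_kernel A = mat_kernel B \<Longrightarrow> dim_col A = dim_col B \<Longrightarrow> kernel_dim A = kernel_dim B"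
  unfolding kernel_dim_def by simp

lemma herm_diag:
  assumes H: "hermitian n A"
  shows "\<exists>P Q d. P \<in> carrier_mat n n \<and> Q \<in> carrier_mat n n \<and> P * Q = 1\<^sub>m n \<and> Q * P = 1\<^sub>m n
     \<and> A = P * diagm n d * Q \<and> (\<forall>i<n. Im (d i) = 0)"
proof -
  have A: "A \<in> carrier_mat n n" using H unfolding hermitian_def by auto
  obtain es where "char_poly A = (\<Prod> a \<leftarrow> es. [:- a, 1:])" using char_poly_factorized[OF A] by blast
  from jordan_nf_exists[OF A this] obtain n_as where jnf: "jordan_nf A n_as" by blast
  from jordan_nf_powE[OF A jnf] have cp: "char_poly A = (\<Prod>(na, a)\<leftarrow>n_as. [:- a, 1:] ^ na)" by blast
  have nz: "0 \<notin> fst ` set n_as" using jnf unfolding jordan_nf_def by auto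
  have real: "Im e = 0" if ke: "(k,e) \<in> set n_as" for k e
  proof -
    have k: "k \<noteq> 0" using nz ke by force
    have "poly (char_poly A) e = 0" unfolding cp poly_prod_list prod_list_zero_iff
      using ke k by (force simp: image_iff)
    hence "eigenvalue A e" using eigenvalue_root_char_poly[OF A] by simp
    then obtain v where "eigenvector A v e" unfolding eigenvalue_def by blast
    hence "v \<in> carrier_vec n" "v \<noteq> 0\<^sub>v n" "A *\<^sub>v v = e \<cdot>\<^sub>v v" using A unfolding eigenvector_def by auto
    thus ?thesis using herm_eigen_real[OF H] by blast
  qed
  have one: "k = 1" if ke: "(k,e) \<in> set n_as" for k e
  proof -
    let ?C = "char_matrix A e"
    have CH: "hermitian n ?C" by (rule char_matrix_herm[OF H real[OF ke]])
    have C: "?C \<in> carrier_mat n n" using A by simp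
    have p1: "?C ^\<^sub>m 1 = ?C" using C by simp
    have p2: "?C ^\<^sub>m 2 = ?C * ?C" using C by (simp add: numeral_2_eq_2)
    have "mat_kernel (?C ^\<^sub>m 2) = mat_kernel (?C ^\<^sub>m 1)"
    proof -
      have "mat_kernel (?C * ?C) = mat_kernel ?C"
      proof (intro equalityI subsetI)
        fix v assume "v \<in> mat_kernel (?C * ?C)"
        hence v: "v \<in> carrier_vec n" and "(?C * ?C) *\<^sub>v v = 0\<^sub>v n" using mat_kernelD[of "?C * ?C" n n] C by auto
        hence "?C *\<^sub>v (?C *\<^sub>v v) = 0\<^sub>v n" using C by (simp add: assoc_mult_mat_vec)
        hence "?C *\<^sub>v v = 0\<^sub>v n" using herm_sq_kernel[OF CH v] by simp
        thus "v \<in> mat_kernel ?C" using C v by (intro mat_kernelI) auto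
      next
        fix v assume "v \<in> mat_kernel ?C"
        hence v: "v \<in> carrier_vec n" and z: "?C *\<^sub>v v = 0\<^sub>v n" using mat_kernelD[of "?C" n n] C by auto
        have "?C *\<^sub>v 0\<^sub>v n = 0\<^sub>v n" using C by (intro eq_vecI) auto
        hence "(?C * ?C) *\<^sub>v v = 0\<^sub>v n" using C v z by (simp add: assoc_mult_mat_vec)
        thus "v \<in> mat_kernel (?C * ?C)" using C v by (intro mat_kernelI) auto
      qed
      thus ?thesis using p1 p2 by simp
    qed
    hence "dim_gen_eigenspace A e 2 = dim_gen_eigenspace A e 1"
      unfolding dim_gen_eigenspace_def using C by (intro kernel_dim_eq) auto
    hence eq: "sum_list (map (min 2) (map fst [(n, e')\<leftarrow>n_as . e' = e])) = sum_list (map (min 1) (map fst [(n, e')\<leftarrow>n_as . e' = e]))"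
      unfolding dim_gen_eigenspace[OF jnf] by simp
    have "k \<in> set (map fst [(n, e')\<leftarrow>n_as . e' = e])" using ke by force
    moreover have "\<forall>x\<in>set (map fst [(n, e')\<leftarrow>n_as . e' = e]). min 1 x \<le> min 2 x" by auto
    ultimately have "min 1 k = min 2 k" using sum_list_eq_le[OF _ eq[symmetric]] by blast
    moreover have "k \<noteq> 0" using nz ke by force
    ultimately show ?thesis by linarith
  qed
  have J: "jordan_matrix n_as = diagm (length n_as) (\<lambda>i. snd (n_as ! i))"
    using one by (intro jm_diag) auto
  from jnf obtain P Q where wit: "similar_mat_wit A (jordan_matrix n_as) P Q"
    unfolding jordan_nf_def similar_mat_def by blast
  hence dims: "P \<in> carrier_mat n n" "Q \<in> carrier_mat n n" "P * Q = 1\<^sub>m n" "Q * P = 1\<^sub>m n"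
     "A = P * jordan_matrix n_as * Q" "jordan_matrix n_as \<in> carrier_mat n n"
    using A unfolding similar_mat_wit_def Let_def by auto
  have len: "length n_as = n" using dims(6) J by auto
  have Ad: "A = P * diagm n (\<lambda>i. snd (n_as ! i)) * Q" using dims(5) J len by simp
  have rd: "\<forall>i<n. Im (snd (n_as ! i)) = 0"
  proof (intro allI impI)
    fix i assume "i < n"
    hence "n_as ! i \<in> set n_as" using len by simp
    hence "(fst (n_as ! i), snd (n_as ! i)) \<in> set n_as" by simp
    thus "Im (snd (n_as ! i)) = 0" by (rule real)
  qed
  show ?thesis using dims(1-4) Ad rd by blast
qed



lemma assoc': assumes "dim_col A = dim_row B" "dim_col B = dim_row C"
  shows "A * B * C = A * (B * (C :: 'a :: semiring_0 mat))"
proof -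
  have a: "A \<in> carrier_mat (dim_row A) (dim_col A)" unfolding carrier_mat_def by blast
  have b: "B \<in> carrier_mat (dim_col A) (dim_col B)" using assms(1) unfolding carrier_mat_def by simp
  have c: "C \<in> carrier_mat (dim_col B) (dim_col C)" using assms(2) unfolding carrier_mat_def by simp
  show ?thesis by (rule assoc_mult_mat[OF a b c])
qed

lemma one_left': assumes "dim_row Z = k" shows "1\<^sub>m k * Z = (Z :: 'a :: semiring_1 mat)"
proof -
  have z: "Z \<in> carrier_mat k (dim_col Z)" using assms unfolding carrier_mat_def by simp
  show ?thesis by (rule left_mult_one_mat[OF z])
qed

lemma one_right': assumes "dim_col Z = k" shows "Z * 1\<^sub>m k = (Z :: 'a :: semiring_1 mat)"
proof -
  have z: "Z \<in> carrier_mat (dim_row Z) k" using assms unfolding carrier_mat_def by simp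
  show ?thesis by (rule right_mult_one_mat[OF z])
qed

lemma PMQ_vec: assumes "P \<in> carrier_mat n n" "M \<in> carrier_mat n n" "Q \<in> carrier_mat n n" "v \<in> carrier_vec n"
  shows "(P * M * Q) *\<^sub>v v = P *\<^sub>v (M *\<^sub>v (Q *\<^sub>v v))"
proof -
  have "(P * M * Q) *\<^sub>v v = (P * M) *\<^sub>v (Q *\<^sub>v v)" by (rule assoc_mult_mat_vec) (use assms in auto)
  also have "\<dots> = P *\<^sub>v (M *\<^sub>v (Q *\<^sub>v v))" by (rule assoc_mult_mat_vec) (use assms in auto)
  finally show ?thesis .
qed

lemma mat_unit: fixes P :: "complex mat" assumes P: "P \<in> carrier_mat n m" and j: "j < m"
  shows "P *\<^sub>v unit_vec m j = col P j"
proof -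
  have "col (P * 1\<^sub>m m) j = P *\<^sub>v col (1\<^sub>m m) j" by (rule col_mult2[OF P _ j]) simp
  moreover have e: "P * 1\<^sub>m m = P" by (rule right_mult_one_mat[OF P])
  ultimately show ?thesis using j by simp
qed

lemma cancel': assumes "A * B = 1\<^sub>m k" "dim_col A = dim_row B" "dim_row Z = dim_col B"
  shows "A * (B * Z) = (Z :: 'a :: semiring_1 mat)"
proof -
  have e1: "(A * B) * Z = A * (B * Z)" by (rule assoc') (use assms in simp_all)
  have "dim_col (A * B) = k" using assms(1) by simp
  hence "dim_row Z = k" using assms(3) by simp
  hence "1\<^sub>m k * Z = Z" by (rule one_left')
  hence "(A * B) * Z = Z" unfolding assms(1) .
  thus ?thesis using e1 by simp
qed

lemma diagm_mult_vec: assumes "w \<in> carrier_vec n"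
  shows "diagm n d *\<^sub>v w = vec n (\<lambda>i. d i * w $ i)"
proof (rule eq_vecI)
  fix i assume i: "i < dim_vec (vec n (\<lambda>i. d i * w $ i))"
  hence i: "i < n" by simp
  have "(diagm n d *\<^sub>v w) $ i = (\<Sum>j<n. diagm n d $$ (i,j) * w $ j)"
    using assms i by (intro mv_index) auto
  also have "\<dots> = (\<Sum>j<n. if j = i then d i * w $ i else 0)"
    using i by (intro sum.cong refl) auto
  also have "\<dots> = d i * w $ i" using i by simp
  finally show "(diagm n d *\<^sub>v w) $ i = vec n (\<lambda>i. d i * w $ i) $ i" using i by simp
qed simp

lemma mult_diagm_index: assumes "P \<in> carrier_mat n n" "i < n" "j < n"
  shows "(P * diagm n d) $$ (i,j) = P $$ (i,j) * d j"
proof -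
  have "(P * diagm n d) $$ (i,j) = (\<Sum>l<n. P $$ (i,l) * diagm n d $$ (l,j))"
    using assms by (simp add: scalar_prod_def atLeast0LessThan)
  also have "\<dots> = (\<Sum>l<n. if l = j then P $$ (i,j) * d j else 0)"
    using assms by (intro sum.cong refl) auto
  also have "\<dots> = P $$ (i,j) * d j" using assms by simp
  finally show ?thesis .
qed

lemma diagm_mult_index: assumes "P \<in> carrier_mat n n" "i < n" "j < n"
  shows "(diagm n d * P) $$ (i,j) = d i * P $$ (i,j)"
proof -
  have "(diagm n d * P) $$ (i,j) = (\<Sum>l<n. diagm n d $$ (i,l) * P $$ (l,j))"
    using assms by (simp add: scalar_prod_def atLeast0LessThan)
  also have "\<dots> = (\<Sum>l<n. if l = i then d i * P $$ (i,j) else 0)"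
    using assms by (intro sum.cong refl) auto
  also have "\<dots> = d i * P $$ (i,j)" using assms by simp
  finally show ?thesis .
qed

lemma col_eigenvector:
  assumes P: "P \<in> carrier_mat n n" and Q: "Q \<in> carrier_mat n n" and QP: "Q * P = 1\<^sub>m n"
    and AD: "A = P * diagm n d * Q" and j: "j < n"
  shows "eigenvector A (col P j) (d j)"
proof -
  have A: "A \<in> carrier_mat n n" using AD P Q by auto
  have cP: "col P j \<in> carrier_vec n" using P unfolding carrier_vec_def carrier_mat_def by simp
  have Qc: "Q *\<^sub>v col P j = unit_vec n j" using col_mult2[OF Q P j] QP j by simp
  have "A *\<^sub>v col P j = P *\<^sub>v (diagm n d *\<^sub>v (Q *\<^sub>v col P j))" unfolding AD by (rule PMQ_vec[OF P _ Q cP]) simp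
  also have "diagm n d *\<^sub>v (Q *\<^sub>v col P j) = vec n (\<lambda>i. d i * unit_vec n j $ i)"
    unfolding Qc by (rule diagm_mult_vec) simp
  also have "vec n (\<lambda>i. d i * unit_vec n j $ i) = d j \<cdot>\<^sub>v unit_vec n j"
  proof (rule eq_vecI)
    fix i assume "i < dim_vec (d j \<cdot>\<^sub>v unit_vec n j)"
    hence i: "i < n" by simp
    show "vec n (\<lambda>i. d i * unit_vec n j $ i) $ i = (d j \<cdot>\<^sub>v unit_vec n j) $ i"
      using i j by (cases "i = j") simp_all
  qed simp
  also have "P *\<^sub>v (d j \<cdot>\<^sub>v unit_vec n j) = d j \<cdot>\<^sub>v (P *\<^sub>v unit_vec n j)"
    by (rule mult_mat_vec[OF P unit_vec_carrier])
  also have "P *\<^sub>v unit_vec n j = col P j" by (rule mat_unit[OF P j])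
  finally have Ac: "A *\<^sub>v col P j = d j \<cdot>\<^sub>v col P j" .
  have nz: "col P j \<noteq> 0\<^sub>v n"
  proof
    assume "col P j = 0\<^sub>v n"
    hence "Q *\<^sub>v col P j = 0\<^sub>v n" using Q by (intro eq_vecI) auto
    hence "unit_vec n j = (0\<^sub>v n :: complex vec)" using Qc by simp
    thus False using j arg_cong[of "unit_vec n j" "0\<^sub>v n :: complex vec" "\<lambda>x. x $ j"] by simp
  qed
  show ?thesis unfolding eigenvector_def using A cP nz Ac by simp
qed

definition thd :: "(nat \<Rightarrow> complex) \<Rightarrow> nat \<Rightarrow> complex" where
  "thd d i = complex_of_real (theta (Re (d i)))"

lemma Theta_decomp:
  assumes P: "P \<in> carrier_mat n n" and Q: "Q \<in> carrier_mat n n" and PQ: "P * Q = 1\<^sub>m n" and QP: "Q * P = 1\<^sub>m n"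
    and AD: "A = P * diagm n d * Q" and real: "\<forall>i<n. Im (d i) = 0"
  shows "Theta A = P * diagm n (thd d) * Q"
proof -
  let ?D = "diagm n d" and ?T = "diagm n (thd d)"
  let ?M = "P * ?T * Q"
  have A: "A \<in> carrier_mat n n" using AD P Q by auto
  have dr: "dim_row A = n" using A by simp
  have M: "?M \<in> carrier_mat n n" using P Q by auto
  have good: "?M *\<^sub>v v = complex_of_real (theta (Re c)) \<cdot>\<^sub>v v" if ev: "eigenvector A v c" for v c
  proof -
    have v: "v \<in> carrier_vec n" and Av: "A *\<^sub>v v = c \<cdot>\<^sub>v v" using ev dr unfolding eigenvector_def by auto
    define w where "w = Q *\<^sub>v v"
    have w: "w \<in> carrier_vec n" using Q v w_def by simp
    have "?D *\<^sub>v w = Q *\<^sub>v (A *\<^sub>v v)"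
    proof -
      have "Q *\<^sub>v (A *\<^sub>v v) = (Q * A) *\<^sub>v v" using Q A v by simp
      also have "Q * A = (Q * P) * ?D * Q" unfolding AD using carrier_matD[OF P] carrier_matD[OF Q] by (simp add: assoc')
      also have "\<dots> = ?D * Q" using QP Q by simp
      finally show ?thesis using Q v w_def assoc_mult_mat_vec[of ?D n n Q n v] by simp
    qed
    also have "\<dots> = c \<cdot>\<^sub>v w" unfolding Av w_def by (rule mult_mat_vec[OF Q v])
    finally have Dw: "?D *\<^sub>v w = c \<cdot>\<^sub>v w" .
    have comp: "d i * w $ i = c * w $ i" if i: "i < n" for i
      using arg_cong[OF Dw, of "\<lambda>x. x $ i"] i w by (simp add: diagm_mult_vec)
    have Tw: "?T *\<^sub>v w = complex_of_real (theta (Re c)) \<cdot>\<^sub>v w"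
    proof (rule eq_vecI)
      fix i assume "i < dim_vec (complex_of_real (theta (Re c)) \<cdot>\<^sub>v w)"
      hence i: "i < n" using w by simp
      show "(?T *\<^sub>v w) $ i = (complex_of_real (theta (Re c)) \<cdot>\<^sub>v w) $ i"
      proof (cases "w $ i = 0")
        case True thus ?thesis using i w by (simp add: diagm_mult_vec)
      next
        case False
        hence "d i = c" using comp[OF i] by simp
        thus ?thesis using i w by (simp add: diagm_mult_vec thd_def)
      qed
    qed (insert w, simp)
    have "?M *\<^sub>v v = (P * ?T) *\<^sub>v (Q *\<^sub>v v)" by (rule assoc_mult_mat_vec) (use P Q v in auto)
    also have "\<dots> = P *\<^sub>v (?T *\<^sub>v w)" unfolding w_def by (rule assoc_mult_mat_vec) (use P Q v in auto)
    also have "\<dots> = complex_of_real (theta (Re c)) \<cdot>\<^sub>v (P *\<^sub>v w)" unfolding Tw by (rule mult_mat_vec[OF P w])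
    also have "P *\<^sub>v w = v" unfolding w_def using P Q v PQ by (simp flip: assoc_mult_mat_vec[of P n n Q n v])
    finally show ?thesis .
  qed
  have uniq: "P' = ?M" if P': "P' \<in> carrier_mat n n"
    and hp: "\<forall>v c. eigenvector A v c \<longrightarrow> P' *\<^sub>v v = complex_of_real (theta (Re c)) \<cdot>\<^sub>v v" for P'
  proof -
    have colev: "P' *\<^sub>v col P j = thd d j \<cdot>\<^sub>v col P j" if j: "j < n" for j
    proof -
      have "eigenvector A (col P j) (d j)" by (rule col_eigenvector[OF P Q QP AD j])
      with hp show ?thesis unfolding thd_def by blast
    qed
    have "P' * P = P * ?T"
    proof (rule eq_matI)
      fix i j assume "i < dim_row (P * ?T)" "j < dim_col (P * ?T)"
      hence i: "i < n" and j: "j < n" using P by auto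
      have "(P' * P) $$ (i,j) = (P' *\<^sub>v col P j) $ i" using P' P i j by simp
      also have "\<dots> = thd d j * P $$ (i,j)" unfolding colev[OF j] using P i j by simp
      also have "\<dots> = (P * ?T) $$ (i,j)" using mult_diagm_index[OF P i j] by simp
      finally show "(P' * P) $$ (i,j) = (P * ?T) $$ (i,j)" .
    qed (use P P' in simp_all)
    hence e1: "P' * P * Q = P * ?T * Q" by (rule arg_cong[of _ _ "\<lambda>X. X * Q"])
    have "P' * P * Q = P' * (P * Q)" by (rule assoc_mult_mat[OF P' P Q])
    also have "\<dots> = P'" unfolding PQ by (rule right_mult_one_mat[OF P'])
    finally show ?thesis using e1 by simp
  qed
  show ?thesis unfolding Theta_def dr
  proof (rule the_equality)
    show "?M \<in> carrier_mat n n \<and> (\<forall>v c. eigenvector A v c \<longrightarrow> ?M *\<^sub>v v = complex_of_real (theta (Re c)) \<cdot>\<^sub>v v)"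
      using M good by blast
  next
    fix P' assume "P' \<in> carrier_mat n n \<and> (\<forall>v c. eigenvector A v c \<longrightarrow> P' *\<^sub>v v = complex_of_real (theta (Re c)) \<cdot>\<^sub>v v)"
    thus "P' = ?M" using uniq by blast
  qed
qed



lemma exp_sums_c: "(\<lambda>k. z ^ k / of_nat (fact k)) sums exp (z::complex)"
proof -
  have "(\<lambda>k. z ^ k /\<^sub>R fact k) sums exp z" by (rule exp_converges)
  moreover have "\<And>k. z ^ k /\<^sub>R fact k = z ^ k / of_nat (fact k)"
    by (simp add: scaleR_conv_of_real divide_inverse mult.commute)
  ultimately show ?thesis by simp
qed

lemma diagm_mult_diagm: "diagm n f * diagm n g = diagm n (\<lambda>i. f i * g i)"
proof (rule eq_matI)
  fix i j assume "i < dim_row (diagm n (\<lambda>i. f i * g i))" "j < dim_col (diagm n (\<lambda>i. f i * g i))"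
  hence i: "i < n" and j: "j < n" by auto
  show "(diagm n f * diagm n g) $$ (i, j) = diagm n (\<lambda>i. f i * g i) $$ (i, j)"
    using diagm_mult_index[OF diagm_carrier(1) i j, of f g] i j by simp
qed simp_all

lemma diagm_one: "diagm n (\<lambda>_. 1) = 1\<^sub>m n"
  by (rule eq_matI) auto

lemma PDQ_index: assumes "P \<in> carrier_mat n n" "Q \<in> carrier_mat n n" "i < n" "j < n"
  shows "(P * diagm n f * Q) $$ (i,j) = (\<Sum>l<n. P $$ (i,l) * f l * Q $$ (l,j))"
proof -
  have "(P * diagm n f * Q) $$ (i,j) = (\<Sum>l<n. (P * diagm n f) $$ (i,l) * Q $$ (l,j))"
    using assms by (simp add: scalar_prod_def atLeast0LessThan)
  also have "\<dots> = (\<Sum>l<n. P $$ (i,l) * f l * Q $$ (l,j))"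
    using assms by (intro sum.cong refl) (simp add: mult_diagm_index del: index_mult_mat(1))
  finally show ?thesis .
qed

lemma PDQ_pow: assumes P: "P \<in> carrier_mat n n" and Q: "Q \<in> carrier_mat n n" and PQ: "P * Q = 1\<^sub>m n" and QP: "Q * P = 1\<^sub>m n"
  shows "(P * diagm n f * Q) ^\<^sub>m k = P * diagm n (\<lambda>i. f i ^ k) * Q"
proof (induct k)
  case 0
  have "P * diagm n (\<lambda>i. f i ^ 0) * Q = P * Q" using P Q by (simp add: diagm_one)
  thus ?case using PQ P by simp
next
  case (Suc k)
  let ?A = "diagm n (\<lambda>i. f i ^ k)" and ?B = "diagm n f"
  have "(P * diagm n f * Q) ^\<^sub>m Suc k = (P * ?A * Q) * (P * ?B * Q)" using Suc by simp
  also have "\<dots> = P * (?A * ?B) * Q" using carrier_matD[OF P] carrier_matD[OF Q]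
    by (simp add: assoc' cancel'[OF QP])
  also have "?A * ?B = diagm n (\<lambda>i. f i ^ Suc k)" unfolding diagm_mult_diagm
    by (simp add: mult.commute)
  finally show ?case .
qed

lemma smult_PDQ: assumes P: "P \<in> carrier_mat n n" and Q: "Q \<in> carrier_mat n n"
  shows "c \<cdot>\<^sub>m (P * diagm n f * Q) = P * diagm n (\<lambda>i. c * f i) * Q"
proof (rule eq_matI)
  fix i j assume "i < dim_row (P * diagm n (\<lambda>i. c * f i) * Q)" "j < dim_col (P * diagm n (\<lambda>i. c * f i) * Q)"
  hence i: "i < n" and j: "j < n" using P Q by auto
  have "(c \<cdot>\<^sub>m (P * diagm n f * Q)) $$ (i,j) = c * (P * diagm n f * Q) $$ (i,j)" using P Q i j by simp
  also have "\<dots> = c * (\<Sum>l<n. P $$ (i,l) * f l * Q $$ (l,j))" by (simp only: PDQ_index[OF P Q i j])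
  also have "\<dots> = (\<Sum>l<n. P $$ (i,l) * (c * f l) * Q $$ (l,j))" by (simp add: sum_distrib_left mult_ac)
  also have "\<dots> = (P * diagm n (\<lambda>i. c * f i) * Q) $$ (i,j)" by (simp only: PDQ_index[OF P Q i j])
  finally show "(c \<cdot>\<^sub>m (P * diagm n f * Q)) $$ (i,j) = (P * diagm n (\<lambda>i. c * f i) * Q) $$ (i,j)" .
qed (use P Q in simp_all)

lemma mexp_PDQ: assumes P: "P \<in> carrier_mat n n" and Q: "Q \<in> carrier_mat n n" and PQ: "P * Q = 1\<^sub>m n" and QP: "Q * P = 1\<^sub>m n"
  shows "mexp (c \<cdot>\<^sub>m (P * diagm n d * Q)) = P * diagm n (\<lambda>i. exp (c * d i)) * Q"
proof -
  let ?f = "\<lambda>i. c * d i"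
  have e: "c \<cdot>\<^sub>m (P * diagm n d * Q) = P * diagm n ?f * Q" by (rule smult_PDQ[OF P Q])
  show ?thesis unfolding e mexp_def
  proof (rule eq_matI)
    fix i j assume "i < dim_row (P * diagm n (\<lambda>i. exp (c * d i)) * Q)" "j < dim_col (P * diagm n (\<lambda>i. exp (c * d i)) * Q)"
    hence i: "i < n" and j: "j < n" using P Q by auto
    have "(\<Sum>k. ((P * diagm n ?f * Q) ^\<^sub>m k) $$ (i,j) / of_nat (fact k))
        = (\<Sum>k. \<Sum>l<n. P $$ (i,l) * Q $$ (l,j) * (?f l ^ k / of_nat (fact k)))"
    proof (rule arg_cong[of _ _ suminf], rule ext)
      fix k
      have "((P * diagm n ?f * Q) ^\<^sub>m k) $$ (i,j) = (P * diagm n (\<lambda>l. ?f l ^ k) * Q) $$ (i,j)"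
        by (simp only: PDQ_pow[OF P Q PQ QP])
      also have "\<dots> = (\<Sum>l<n. P $$ (i,l) * ?f l ^ k * Q $$ (l,j))" by (simp only: PDQ_index[OF P Q i j])
      finally show "((P * diagm n ?f * Q) ^\<^sub>m k) $$ (i,j) / of_nat (fact k) = (\<Sum>l<n. P $$ (i,l) * Q $$ (l,j) * (?f l ^ k / of_nat (fact k)))"
        by (simp add: sum_divide_distrib mult_ac)
    qed
    also have "\<dots> = (\<Sum>l<n. \<Sum>k. P $$ (i,l) * Q $$ (l,j) * (?f l ^ k / of_nat (fact k)))"
      by (rule suminf_sum) (intro summable_mult sums_summable[OF exp_sums_c])
    also have "\<dots> = (\<Sum>l<n. P $$ (i,l) * Q $$ (l,j) * exp (?f l))"
      by (intro sum.cong refl sums_unique[symmetric] sums_mult exp_sums_c)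
    also have "\<dots> = (P * diagm n (\<lambda>i. exp (c * d i)) * Q) $$ (i,j)"
      by (simp only: PDQ_index[OF P Q i j] mult_ac)
    finally show "mat (dim_row (P * diagm n ?f * Q)) (dim_col (P * diagm n ?f * Q))
          (\<lambda>(i, j). \<Sum>k. ((P * diagm n ?f * Q) ^\<^sub>m k) $$ (i, j) / of_nat (fact k)) $$ (i, j) =
         (P * diagm n (\<lambda>i. exp (c * d i)) * Q) $$ (i, j)" using P Q i j by simp
  qed (insert P Q, auto)
qed



lemma diagm_inv: assumes "\<forall>l<n. f l * g l = 1" shows "diagm n f * diagm n g = 1\<^sub>m n"
  unfolding diagm_mult_diagm using assms by (intro eq_matI) auto

lemma Theta_conj:
  assumes P: "P \<in> carrier_mat n n" and Q: "Q \<in> carrier_mat n n" and PQ: "P * Q = 1\<^sub>m n" and QP: "Q * P = 1\<^sub>m n"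
    and R: "R \<in> carrier_mat n n" and R': "R' \<in> carrier_mat n n" and RR: "R * R' = 1\<^sub>m n" and RR': "R' * R = 1\<^sub>m n"
    and XD: "X = R * diagm n \<delta> * R'" and real: "\<forall>i<n. Im (\<delta> i) = 0"
    and fg: "\<forall>l<n. f l * g l = 1"
  shows "Theta (P * diagm n f * Q * X * (P * diagm n g * Q)) = P * (diagm n f * (Q * Theta X * P) * diagm n g) * Q"
proof -
  let ?F = "diagm n f" and ?G = "diagm n g" and ?T = "diagm n (thd \<delta>)" and ?D = "diagm n \<delta>"
  have FG: "?F * ?G = 1\<^sub>m n" by (rule diagm_inv[OF fg])
  have GF: "?G * ?F = 1\<^sub>m n" using fg by (intro diagm_inv) (auto simp: mult.commute)
  define G1 where "G1 = P * ?F * Q * R"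
  define G2 where "G2 = R' * (P * ?G * Q)"
  have G1: "G1 \<in> carrier_mat n n" and G2: "G2 \<in> carrier_mat n n" unfolding G1_def G2_def using P Q R R' by auto
  note dims = carrier_matD[OF P] carrier_matD[OF Q] carrier_matD[OF R] carrier_matD[OF R']
  have c1: "G1 * G2 = 1\<^sub>m n" unfolding G1_def G2_def using dims
    by (simp add: assoc' cancel'[OF RR] cancel'[OF QP] cancel'[OF FG] PQ)
  have c2: "G2 * G1 = 1\<^sub>m n" unfolding G1_def G2_def using dims
    by (simp add: assoc' cancel'[OF QP] cancel'[OF GF] cancel'[OF PQ] RR')
  have e: "P * ?F * Q * X * (P * ?G * Q) = G1 * ?D * G2" unfolding G1_def G2_def XD using dims
    by (simp add: assoc')
  have "Theta (P * ?F * Q * X * (P * ?G * Q)) = G1 * ?T * G2" unfolding e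
    by (rule Theta_decomp[OF G1 G2 c1 c2 refl real])
  moreover have "Theta X = R * ?T * R'" by (rule Theta_decomp[OF R R' RR RR' XD real])
  ultimately show ?thesis unfolding G1_def G2_def using dims by (simp add: assoc')
qed

lemma PDQ_diff: assumes P: "P \<in> carrier_mat n n" and Q: "Q \<in> carrier_mat n n"
  shows "P * diagm n (\<lambda>l. f l - g l) * Q = P * diagm n f * Q - P * diagm n g * Q"
proof (rule eq_matI)
  fix i j assume "i < dim_row (P * diagm n f * Q - P * diagm n g * Q)" "j < dim_col (P * diagm n f * Q - P * diagm n g * Q)"
  hence i: "i < n" and j: "j < n" using P Q by auto
  have "(P * diagm n f * Q - P * diagm n g * Q) $$ (i,j) = (P * diagm n f * Q) $$ (i,j) - (P * diagm n g * Q) $$ (i,j)"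
    using P Q i j by simp
  also have "\<dots> = (\<Sum>l<n. P $$ (i,l) * f l * Q $$ (l,j)) - (\<Sum>l<n. P $$ (i,l) * g l * Q $$ (l,j))"
    by (simp only: PDQ_index[OF P Q i j])
  also have "\<dots> = (\<Sum>l<n. P $$ (i,l) * (f l - g l) * Q $$ (l,j))"
    by (simp add: sum_subtractf[symmetric] algebra_simps)
  also have "\<dots> = (P * diagm n (\<lambda>l. f l - g l) * Q) $$ (i,j)" by (simp only: PDQ_index[OF P Q i j])
  finally show "(P * diagm n (\<lambda>l. f l - g l) * Q) $$ (i,j) = (P * diagm n f * Q - P * diagm n g * Q) $$ (i,j)" by simp
qed (use P Q in simp_all)

lemma theta_neg: "theta (- x) = 1 - theta x"
  unfolding theta_def by auto

lemma Theta_neg: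
  assumes R: "R \<in> carrier_mat n n" and R': "R' \<in> carrier_mat n n" and RR: "R * R' = 1\<^sub>m n" and RR': "R' * R = 1\<^sub>m n"
    and XD: "X = R * diagm n \<delta> * R'" and real: "\<forall>i<n. Im (\<delta> i) = 0"
  shows "Theta ((-1) \<cdot>\<^sub>m X) = 1\<^sub>m n - Theta X"
proof -
  have e: "(-1) \<cdot>\<^sub>m X = R * diagm n (\<lambda>i. -1 * \<delta> i) * R'" unfolding XD by (rule smult_PDQ[OF R R'])
  have r2: "\<forall>i<n. Im (-1 * \<delta> i) = 0" using real by simp
  have "Theta ((-1) \<cdot>\<^sub>m X) = R * diagm n (thd (\<lambda>i. -1 * \<delta> i)) * R'"
    unfolding e by (rule Theta_decomp[OF R R' RR RR' refl r2])
  also have "thd (\<lambda>i. -1 * \<delta> i) = (\<lambda>i. 1 - thd \<delta> i)" unfolding thd_def by (auto simp: theta_neg)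
  also have "R * diagm n (\<lambda>i. 1 - thd \<delta> i) * R' = R * diagm n (\<lambda>_. 1) * R' - R * diagm n (thd \<delta>) * R'"
    by (rule PDQ_diff[OF R R'])
  also have "R * diagm n (\<lambda>_. 1) * R' = 1\<^sub>m n" using R R' RR by (simp add: diagm_one)
  also have "R * diagm n (thd \<delta>) * R' = Theta X" by (rule Theta_decomp[OF R R' RR RR' XD real, symmetric])
  finally show ?thesis .
qed

lemma DMD_index: assumes "M \<in> carrier_mat n n" "l < n" "m < n"
  shows "(diagm n f * M * diagm n g) $$ (l,m) = f l * M $$ (l,m) * g m"
proof -
  have c: "diagm n f * M \<in> carrier_mat n n" by (rule mult_carrier_mat[OF diagm_carrier(1) assms(1)])
  show ?thesis using mult_diagm_index[OF c assms(2,3), of g] diagm_mult_index[OF assms(1,2,3), of f] by simp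
qed

lemma sandwich: fixes P Q M :: "complex mat" assumes P: "P \<in> carrier_mat n n" and Q: "Q \<in> carrier_mat n n" and QP: "Q * P = 1\<^sub>m n" and M: "M \<in> carrier_mat n n"
  shows "Q * (P * M * Q) * P = M"
  using carrier_matD[OF P] carrier_matD[OF Q] carrier_matD[OF M] by (simp add: assoc' cancel'[OF QP] QP one_right')

lemma PMQ_index: fixes P Q M :: "complex mat" assumes "P \<in> carrier_mat n n" "Q \<in> carrier_mat n n" "M \<in> carrier_mat n n" "i < n" "j < n"
  shows "(P * M * Q) $$ (i,j) = (\<Sum>l<n. \<Sum>m<n. P $$ (i,l) * M $$ (l,m) * Q $$ (m,j))"
proof -
  have "(P * M * Q) $$ (i,j) = (P * (M * Q)) $$ (i,j)" using assms by simp
  also have "\<dots> = (\<Sum>l<n. P $$ (i,l) * (M * Q) $$ (l,j))"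
    using assms by (simp add: scalar_prod_def atLeast0LessThan del: assoc_mult_mat)
  also have "\<dots> = (\<Sum>l<n. \<Sum>m<n. P $$ (i,l) * M $$ (l,m) * Q $$ (m,j))"
    using assms by (intro sum.cong refl) (simp add: scalar_prod_def atLeast0LessThan sum_distrib_left mult.assoc del: assoc_mult_mat)
  finally show ?thesis .
qed

lemma mtrace_mult: assumes "A \<in> carrier_mat n n" "B \<in> carrier_mat n n"
  shows "mtrace (A * B) = (\<Sum>i<n. \<Sum>j<n. A $$ (i,j) * B $$ (j,i))"
  using assms unfolding mtrace_def by (simp add: scalar_prod_def atLeast0LessThan)

lemma eigen_in_diag:
  assumes P: "P \<in> carrier_mat n n" and Q: "Q \<in> carrier_mat n n" and PQ: "P * Q = 1\<^sub>m n" and QP: "Q * P = 1\<^sub>m n"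
    and AD: "A = P * diagm n d * Q" and ev: "eigenvalue A c"
  shows "\<exists>i<n. d i = c"
proof -
  let ?D = "diagm n d"
  have A: "A \<in> carrier_mat n n" using AD P Q by auto
  obtain v where "eigenvector A v c" using ev unfolding eigenvalue_def by blast
  hence v: "v \<in> carrier_vec n" and v0: "v \<noteq> 0\<^sub>v n" and Av: "A *\<^sub>v v = c \<cdot>\<^sub>v v" using A unfolding eigenvector_def by auto
  define w where "w = Q *\<^sub>v v"
  have w: "w \<in> carrier_vec n" using Q v w_def by simp
  have "?D *\<^sub>v w = Q *\<^sub>v (A *\<^sub>v v)"
  proof -
    have "Q *\<^sub>v (A *\<^sub>v v) = (Q * A) *\<^sub>v v" using Q A v by simp
    also have "Q * A = (Q * P) * ?D * Q" unfolding AD using carrier_matD[OF P] carrier_matD[OF Q] by (simp add: assoc')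
    also have "\<dots> = ?D * Q" using QP Q by simp
    finally show ?thesis using Q v w_def assoc_mult_mat_vec[of ?D n n Q n v] by simp
  qed
  also have "\<dots> = c \<cdot>\<^sub>v w" unfolding Av w_def by (rule mult_mat_vec[OF Q v])
  finally have Dw: "?D *\<^sub>v w = c \<cdot>\<^sub>v w" .
  have comp: "d i * w $ i = c * w $ i" if i: "i < n" for i
    using arg_cong[OF Dw, of "\<lambda>x. x $ i"] i w by (simp add: diagm_mult_vec)
  have "P *\<^sub>v w = v" unfolding w_def using P Q v PQ by (simp flip: assoc_mult_mat_vec[of P n n Q n v])
  hence wnz: "w \<noteq> 0\<^sub>v n" using v0 P by (auto intro!: eq_vecI)
  have "\<exists>i<n. w $ i \<noteq> 0"
  proof (rule ccontr)
    assume "\<not> (\<exists>i<n. w $ i \<noteq> 0)"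
    hence "w = 0\<^sub>v n" using w by (intro eq_vecI) auto
    with wnz show False by simp
  qed
  then obtain i where i: "i < n" "w $ i \<noteq> 0" by blast
  thus ?thesis using comp[OF i(1)] by auto
qed

lemma col_eigen:
  assumes P: "P \<in> carrier_mat n n" and Q: "Q \<in> carrier_mat n n" and QP: "Q * P = 1\<^sub>m n"
    and AD: "A = P * diagm n d * Q" and j: "j < n"
  shows "eigenvalue A (d j)"
  using col_eigenvector[OF P Q QP AD j] unfolding eigenvalue_def by blast

lemma exp_pair_cis: assumes "Im z1 = 0" "Im z2 = 0"
  shows "exp ((\<i> * complex_of_real a) * z1) * exp ((- \<i> * complex_of_real a) * z2) = cis (a * (Re z1 - Re z2))"
proof -
  have "exp ((\<i> * complex_of_real a) * z1) * exp ((- \<i> * complex_of_real a) * z2)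
      = exp (\<i> * complex_of_real (a * (Re z1 - Re z2)))"
    unfolding exp_add[symmetric] using assms by (intro arg_cong[of _ _ exp]) (simp add: complex_eq_iff algebra_simps)
  thus ?thesis by (simp add: cis_conv_exp)
qed



lemma mult3_carrier: "A \<in> carrier_mat n n \<Longrightarrow> B \<in> carrier_mat n n \<Longrightarrow> C \<in> carrier_mat n n \<Longrightarrow> A * B * C \<in> carrier_mat n n"
  by (intro mult_carrier_mat)


lemma cis_minus1_odd: assumes "cis (pi * r) = -1" shows "\<exists>k::int. r = 2 * k - 1"
proof -
  have "cos (pi * r) = -1" using arg_cong[OF assms, of Re] by simp
  hence "cos (pi * r + pi) = 1" by (simp add: cos_add)
  then obtain k :: int where "pi * r + pi = real_of_int k * 2 * pi" using cos_one_2pi_int by blast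
  hence "pi * (r + 1) = pi * (2 * real_of_int k)" by (simp add: algebra_simps)
  hence "r + 1 = 2 * real_of_int k" by simp
  thus ?thesis by (intro exI[of _ k]) linarith
qed
lemma sum3_cis: assumes "r = 1 \<or> r = -1"
  shows "(\<Sum>k<3::nat. cis (2*pi*real k*r/3)) = 0"
proof -
  let ?z = "cis (2*pi*r/3)"
  have pw: "cis (2*pi*real k*r/3) = ?z ^ k" for k by (simp add: DeMoivre mult.commute mult.left_commute)
  have z3: "?z ^ 3 = 1" using assms by (auto simp: DeMoivre complex_eq_iff)
  have z1: "?z \<noteq> 1"
  proof
    assume "?z = 1"
    hence "cos (2*pi*r/3) = 1" by (metis cis.sel(1) one_complex.sel(1))
    moreover have "cos (2*pi*r/3) = -1/2" using assms
    proof
      assume "r = 1" thus ?thesis using cos_120 by simp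
    next
      assume "r = -1" thus ?thesis using cos_120 by simp
    qed
    ultimately show False by simp
  qed
  have "(\<Sum>k<3::nat. cis (2*pi*real k*r/3)) = 1 + ?z + ?z^2" unfolding pw by (simp add: numeral_3_eq_3 power2_eq_square)
  moreover have "(?z - 1) * (1 + ?z + ?z^2) = ?z^3 - 1" by (simp add: algebra_simps power2_eq_square power3_eq_cube)
  ultimately show ?thesis using z3 z1 by simp
qed

lemma key:
  fixes a b :: real and s :: complex and isd :: bool and V :: "real set" and W :: "(real\<times>real) set"
  assumes fin: "finite V" "card V \<le> 3" "a \<in> V" "b \<in> V"
   and Wsub: "W \<subseteq> V \<times> V" and W1: "\<forall>(p,q)\<in>W. p - q = 1 \<or> p - q = -1"
   and F2: "\<forall>C. (\<forall>(p,q)\<in>W. p \<in> C \<longleftrightarrow> q \<in> C) \<longrightarrow> s \<noteq> 0 \<longrightarrow> (a \<in> C \<longleftrightarrow> b \<in> C)"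
   and F1: "cis (pi * (a - b)) * s = (if isd then 1 else 0) - s"
   and eqab: "isd \<Longrightarrow> a = b"
  shows "s * (\<Sum>k<3::nat. cis (2*pi*real k*(a-b)/3)) = (if isd then 3/2 else 0)"
proof (cases isd)
  case True
  hence ab: "a = b" using eqab by simp
  hence "s = 1 - s" using F1 True by simp
  hence "2 * s = 1" by (simp add: algebra_simps)
  hence s: "s = 1/2" by (simp add: mult.commute)
  show ?thesis using True ab by (simp add: s numeral_3_eq_3)
next
  case False
  show ?thesis
  proof (cases "s = 0")
    case True thus ?thesis using False by simp
  next
    case sn: False
    have "(cis (pi * (a - b)) + 1) * s = 0" using F1 False by (simp add: algebra_simps)
    hence "cis (pi * (a - b)) = -1" using sn by (simp add: add_eq_0_iff2)
    then obtain k :: int where k: "a - b = 2 * real_of_int k - 1" using cis_minus1_odd by blast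
    show ?thesis
    proof (cases "a - b = 1 \<or> a - b = -1")
      case True thus ?thesis using sum3_cis[OF True] False by simp
    next
      case far: False
      have i1: "2 * k \<noteq> 1" "2 * k \<noteq> -1" "2 * k \<noteq> 3" by presburger+
      have r1: "2 * real_of_int k \<noteq> 1" "2 * real_of_int k \<noteq> -1" "2 * real_of_int k \<noteq> 3"
        using i1 by linarith+
      have bn: "b \<noteq> a" "b \<noteq> a + 1" "b \<noteq> a - 1" "b \<noteq> a + 2" "b \<noteq> a - 2"
        using far k r1 by auto
      define C where "C = {a} \<union> ({a+1, a-1} \<inter> V)"
      have four: False if "x \<in> V" "x + 1 \<in> V" "x - 1 \<in> V" "b \<noteq> x" "b \<noteq> x + 1" "b \<noteq> x - 1" for x
      proof -
        have "{x - 1, x, x + 1, b} \<subseteq> V" using that fin by auto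
        hence "card {x - 1, x, x + 1, b} \<le> card V" using fin by (intro card_mono) auto
        moreover have "card {x - 1, x, x + 1, b} = 4" using that by auto
        ultimately show False using fin by simp
      qed
      have compat: "\<forall>(p,q)\<in>W. p \<in> C \<longleftrightarrow> q \<in> C"
      proof (intro ballI, clarify)
        fix p q assume pq: "(p,q) \<in> W"
        have pV: "p \<in> V" and qV: "q \<in> V" using pq Wsub by auto
        have d: "p - q = 1 \<or> p - q = -1" using pq W1 by auto
        have imp: "u \<in> C" if "v \<in> C" "u \<in> V" "u - v = 1 \<or> u - v = -1" for u v
        proof -
          from that(1) have "v = a \<or> (v = a + 1 \<and> v \<in> V) \<or> (v = a - 1 \<and> v \<in> V)" unfolding C_def by auto
          thus ?thesis
          proof (elim disjE conjE)
            assume "v = a" thus ?thesis using that unfolding C_def by auto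
          next
            assume v: "v = a + 1" "v \<in> V"
            show ?thesis
            proof (cases "u = a")
              case True thus ?thesis unfolding C_def by auto
            next
              case False
              hence "u = a + 2" using that(3) v by auto
              thus ?thesis using four[of "a + 1"] v that(2) bn fin(3) by (auto simp: algebra_simps)
            qed
          next
            assume v: "v = a - 1" "v \<in> V"
            show ?thesis
            proof (cases "u = a")
              case True thus ?thesis unfolding C_def by auto
            next
              case False
              hence "u = a - 2" using that(3) v by auto
              thus ?thesis using four[of "a - 1"] v that(2) bn fin(3) by (auto simp: algebra_simps)
            qed
          qed
        qed
        show "p \<in> C \<longleftrightarrow> q \<in> C" using imp[of q p] imp[of p q] d pV qV by auto
      qed
      have "a \<in> C" "b \<notin> C" unfolding C_def using bn by auto
      with F2 compat sn show ?thesis by blast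
    qed
  qed
qed



lemma cis_const_one: assumes "\<forall>s. cis (s * q) = 1" shows "q = 0"
proof (rule ccontr)
  assume q: "q \<noteq> 0"
  have "cis ((pi / q) * q) = 1" using assms by blast
  hence "cis pi = 1" using q by simp
  thus False by (simp add: complex_eq_iff)
qed

lemma rot_r:
  assumes h: "\<forall>s::real. cis (s * r) * x = complex_of_real (cos s) * x + complex_of_real (sin s) * y"
    and x: "x \<noteq> 0"
  shows "r = 1 \<or> r = -1"
proof -
  define \<alpha> where "\<alpha> = cis (pi / 2 * r)"
  have y: "y = \<alpha> * x" using h[rule_format, of "pi/2"] unfolding \<alpha>_def by simp
  have "cis (pi * r) * x = - x" using h[rule_format, of pi] by simp
  moreover have "cis (pi * r) = \<alpha> ^ 2" unfolding \<alpha>_def by (simp add: DeMoivre)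
  ultimately have "(\<alpha>^2 + 1) * x = 0" by (simp add: algebra_simps)
  hence a2: "\<alpha>^2 + 1 = 0" using x by simp
  have "(\<alpha> - \<i>) * (\<alpha> + \<i>) = \<alpha>^2 + 1" by (simp add: algebra_simps power2_eq_square)
  hence ai: "\<alpha> = \<i> \<or> \<alpha> = - \<i>" using a2 by (simp add: add_eq_0_iff2)
  have gen: "cis (s * r) = complex_of_real (cos s) + complex_of_real (sin s) * \<alpha>" for s
  proof -
    have "cis (s * r) * x = (complex_of_real (cos s) + complex_of_real (sin s) * \<alpha>) * x"
      using h[rule_format, of s] unfolding y by (simp add: algebra_simps)
    thus ?thesis using x by simp
  qed
  from ai show ?thesis
  proof
    assume a: "\<alpha> = \<i>"
    have "\<forall>s. cis (s * (r - 1)) = 1"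
    proof
      fix s
      have "cis (s * r) = cis s" using gen[of s] a by (simp add: complex_eq_iff)
      hence "cis (s * r) / cis s = 1" by simp
      thus "cis (s * (r - 1)) = 1" by (simp add: cis_divide algebra_simps)
    qed
    thus ?thesis using cis_const_one by fastforce
  next
    assume a: "\<alpha> = - \<i>"
    have "\<forall>s. cis (s * (r + 1)) = 1"
    proof
      fix s
      have "cis (s * r) = cis (- s)" using gen[of s] a by (simp add: complex_eq_iff)
      hence "cis (s * r) / cis (-s) = 1" by simp
      thus "cis (s * (r + 1)) = 1" by (simp add: cis_divide algebra_simps)
    qed
    thus ?thesis using cis_const_one by fastforce
  qed
qed

theorem mainTheorem3:
  fixes n :: nat and H X Y \<rho> :: "complex mat" and \<omega> hbar :: real
  assumes "hermitian n H" and "hermitian n X" and "hermitian n Y"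
    and "card {c. eigenvalue H c} \<le> 3 \<or> n \<le> 3"
    and "\<omega> > 0" and "hbar > 0"
    and "\<forall>t::real. heis hbar H X t = complex_of_real (cos (\<omega> * t)) \<cdot>\<^sub>m X + complex_of_real (sin (\<omega> * t)) \<cdot>\<^sub>m Y"
    and "\<forall>t::real. heis hbar H Y t = complex_of_real (cos (\<omega> * t)) \<cdot>\<^sub>m Y - complex_of_real (sin (\<omega> * t)) \<cdot>\<^sub>m X"
    and "density_op n \<rho>"
  shows "(1/3) * (\<Sum>k<3::nat. mtrace (Theta (heis hbar H X (2 * pi * real k / (3 * \<omega>))) * \<rho>)) = 1/2"
proof -
  note hH = assms(1) and hX = assms(2) and hY = assms(3) and card3 = assms(4)
    and om = assms(5) and hb = assms(6) and hypX = assms(7) and dens = assms(9)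
  have Xc: "X \<in> carrier_mat n n" using hX unfolding hermitian_def by auto
  have Yc: "Y \<in> carrier_mat n n" using hY unfolding hermitian_def by auto
  have rc: "\<rho> \<in> carrier_mat n n" and tr: "mtrace \<rho> = 1"
    using dens unfolding density_op_def hermitian_def by auto
  obtain P Q d where P: "P \<in> carrier_mat n n" and Q: "Q \<in> carrier_mat n n" and PQ: "P * Q = 1\<^sub>m n"
    and QP: "Q * P = 1\<^sub>m n" and HD: "H = P * diagm n d * Q" and dreal: "\<forall>i<n. Im (d i) = 0"
    using herm_diag[OF hH] by blast
  obtain R R' \<delta> where R: "R \<in> carrier_mat n n" and R': "R' \<in> carrier_mat n n" and RR: "R * R' = 1\<^sub>m n"
    and RR': "R' * R = 1\<^sub>m n" and XD: "X = R * diagm n \<delta> * R'" and \<delta>real: "\<forall>i<n. Im (\<delta> i) = 0"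
    using herm_diag[OF hX] by blast
  define e where "e = (\<lambda>l. Re (d l) / (hbar * \<omega>))"
  define ef where "ef = (\<lambda>t l. exp ((\<i> * complex_of_real (t / hbar)) * d l))"
  define em where "em = (\<lambda>t l. exp ((- \<i> * complex_of_real (t / hbar)) * d l))"
  have efem: "\<forall>l<n. ef t l * em t l = 1" for t
    unfolding ef_def em_def by (simp add: exp_add[symmetric])
  have cisid: "ef t l * em t m = cis (\<omega> * t * (e l - e m))" if "l < n" "m < n" for t l m
  proof -
    have "ef t l * em t m = cis ((t / hbar) * (Re (d l) - Re (d m)))"
      unfolding ef_def em_def by (rule exp_pair_cis) (use dreal that in auto)
    also have "(t / hbar) * (Re (d l) - Re (d m)) = \<omega> * t * (e l - e m)"
      unfolding e_def using om hb by (simp add: field_simps)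
    finally show ?thesis .
  qed
  have heisE: "heis hbar H Z t = P * diagm n (ef t) * Q * Z * (P * diagm n (em t) * Q)" for Z t
    unfolding heis_def HD mexp_PDQ[OF P Q PQ QP] ef_def em_def ..
  define X' where "X' = Q * X * P"
  define Y' where "Y' = Q * Y * P"
  define S' where "S' = Q * Theta X * P"
  have ThX: "Theta X = R * diagm n (thd \<delta>) * R'" by (rule Theta_decomp[OF R R' RR RR' XD \<delta>real])
  have Thc: "Theta X \<in> carrier_mat n n" unfolding ThX by (rule mult3_carrier[OF R diagm_carrier(1) R'])
  have X'c: "X' \<in> carrier_mat n n" and Y'c: "Y' \<in> carrier_mat n n" and S'c: "S' \<in> carrier_mat n n"
    unfolding X'_def Y'_def S'_def by (rule mult3_carrier[OF Q _ P]; fact)+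
  note dims = carrier_matD[OF P] carrier_matD[OF Q] carrier_matD[OF Xc] carrier_matD[OF X'c] carrier_matD[OF S'c]
  have XPX: "P * X' * Q = X" unfolding X'_def using dims
    by (simp add: assoc' cancel'[OF PQ] PQ one_right')
  have conj: "Theta (P * diagm n f * Q * X * (P * diagm n g * Q)) = P * (diagm n f * S' * diagm n g) * Q"
    if "\<forall>l<n. f l * g l = 1" for f g
    unfolding S'_def by (rule Theta_conj[OF P Q PQ QP R R' RR RR' XD \<delta>real that])
  have reassoc: "P * diagm n f * Q * X * (P * diagm n g * Q) = P * (diagm n f * X' * diagm n g) * Q" for f g
    unfolding X'_def using dims by (simp add: assoc')
  have entry_hyp: "cis (\<omega> * t * (e l - e m)) * X' $$ (l,m) = complex_of_real (cos (\<omega> * t)) * X' $$ (l,m) + complex_of_real (sin (\<omega> * t)) * Y' $$ (l,m)"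
    if l: "l < n" and m: "m < n" for t l m
  proof -
    let ?a = "complex_of_real (cos (\<omega> * t))" and ?b = "complex_of_real (sin (\<omega> * t))"
    have h: "P * diagm n (ef t) * Q * X * (P * diagm n (em t) * Q) = ?a \<cdot>\<^sub>m X + ?b \<cdot>\<^sub>m Y"
      using hypX[rule_format, of t] unfolding heisE .
    have Zc: "?a \<cdot>\<^sub>m X + ?b \<cdot>\<^sub>m Y \<in> carrier_mat n n" using Xc Yc by simp
    have "diagm n (ef t) * X' * diagm n (em t) = Q * (P * (diagm n (ef t) * X' * diagm n (em t)) * Q) * P"
      by (rule sandwich[OF P Q QP, symmetric]) (rule mult3_carrier[OF diagm_carrier(1) X'c diagm_carrier(1)])
    also have "\<dots> = Q * (?a \<cdot>\<^sub>m X + ?b \<cdot>\<^sub>m Y) * P" unfolding h[unfolded reassoc] ..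
    finally have eqm: "diagm n (ef t) * X' * diagm n (em t) = Q * (?a \<cdot>\<^sub>m X + ?b \<cdot>\<^sub>m Y) * P" .
    have "(Q * (?a \<cdot>\<^sub>m X + ?b \<cdot>\<^sub>m Y) * P) $$ (l,m) = (\<Sum>i<n. \<Sum>j<n. Q $$ (l,i) * (?a \<cdot>\<^sub>m X + ?b \<cdot>\<^sub>m Y) $$ (i,j) * P $$ (j,m))"
      by (rule PMQ_index[OF Q P Zc l m])
    also have "\<dots> = ?a * (\<Sum>i<n. \<Sum>j<n. Q $$ (l,i) * X $$ (i,j) * P $$ (j,m)) + ?b * (\<Sum>i<n. \<Sum>j<n. Q $$ (l,i) * Y $$ (i,j) * P $$ (j,m))"
      using Xc Yc by (simp add: sum.distrib sum_distrib_left algebra_simps)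
    also have "\<dots> = ?a * X' $$ (l,m) + ?b * Y' $$ (l,m)"
      unfolding X'_def Y'_def by (simp only: PMQ_index[OF Q P Xc l m] PMQ_index[OF Q P Yc l m])
    finally have "(diagm n (ef t) * X' * diagm n (em t)) $$ (l,m) = ?a * X' $$ (l,m) + ?b * Y' $$ (l,m)"
      unfolding eqm .
    hence "ef t l * X' $$ (l,m) * em t m = ?a * X' $$ (l,m) + ?b * Y' $$ (l,m)"
      unfolding DMD_index[OF X'c l m] .
    moreover have "ef t l * X' $$ (l,m) * em t m = cis (\<omega> * t * (e l - e m)) * X' $$ (l,m)"
      using cisid[OF l m, of t] by (simp add: mult_ac)
    ultimately show ?thesis by simp
  qed
  have F3: "e p - e q = 1 \<or> e p - e q = -1" if p: "p < n" and q: "q < n" and nz: "X' $$ (p,q) \<noteq> 0" for p q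
  proof (rule rot_r[OF _ nz])
    show "\<forall>s. cis (s * (e p - e q)) * X' $$ (p, q) = complex_of_real (cos s) * X' $$ (p, q) + complex_of_real (sin s) * Y' $$ (p, q)"
    proof
      fix s
      have "\<omega> * (s / \<omega>) = s" using om by simp
      thus "cis (s * (e p - e q)) * X' $$ (p, q) = complex_of_real (cos s) * X' $$ (p, q) + complex_of_real (sin s) * Y' $$ (p, q)"
        using entry_hyp[OF p q, of "s / \<omega>"] by simp
    qed
  qed
  have F1: "cis (pi * (e l - e m)) * S' $$ (l,m) = (if l = m then 1 else 0) - S' $$ (l,m)"
    if l: "l < n" and m: "m < n" for l m
  proof -
    define t0 where "t0 = pi / \<omega>"
    have wt: "\<omega> * t0 = pi" unfolding t0_def using om by simp
    have "heis hbar H X t0 = complex_of_real (cos pi) \<cdot>\<^sub>m X + complex_of_real (sin pi) \<cdot>\<^sub>m Y"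
      using hypX[rule_format, of t0] unfolding wt .
    also have "\<dots> = (-1) \<cdot>\<^sub>m X" by (rule eq_matI) (use Xc Yc in simp_all)
    finally have e0: "P * diagm n (ef t0) * Q * X * (P * diagm n (em t0) * Q) = (-1) \<cdot>\<^sub>m X" unfolding heisE .
    have "P * (diagm n (ef t0) * S' * diagm n (em t0)) * Q = 1\<^sub>m n - Theta X"
      using conj[OF efem, of t0] unfolding e0 Theta_neg[OF R R' RR RR' XD \<delta>real] by simp
    hence "Q * (P * (diagm n (ef t0) * S' * diagm n (em t0)) * Q) * P = Q * (1\<^sub>m n - Theta X) * P" by simp
    moreover have "Q * (P * (diagm n (ef t0) * S' * diagm n (em t0)) * Q) * P = diagm n (ef t0) * S' * diagm n (em t0)"
      by (rule sandwich[OF P Q QP]) (rule mult3_carrier[OF diagm_carrier(1) S'c diagm_carrier(1)])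
    moreover have "Q * (1\<^sub>m n - Theta X) * P = 1\<^sub>m n - S'"
    proof -
      have "Q * (1\<^sub>m n - Theta X) = Q * 1\<^sub>m n - Q * Theta X" by (rule mult_minus_distrib_mat[OF Q one_carrier_mat Thc])
      also have "Q * 1\<^sub>m n = Q" by (rule right_mult_one_mat[OF Q])
      finally have "Q * (1\<^sub>m n - Theta X) * P = (Q - Q * Theta X) * P" by simp
      also have "\<dots> = Q * P - Q * Theta X * P" by (rule minus_mult_distrib_mat[OF Q _ P]) (use Q Thc in simp)
      finally show ?thesis unfolding QP S'_def .
    qed
    ultimately have "diagm n (ef t0) * S' * diagm n (em t0) = 1\<^sub>m n - S'" by simp
    hence "(diagm n (ef t0) * S' * diagm n (em t0)) $$ (l,m) = (1\<^sub>m n - S') $$ (l,m)" by simp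
    hence "ef t0 l * S' $$ (l,m) * em t0 m = (if l = m then 1 else 0) - S' $$ (l,m)"
      unfolding DMD_index[OF S'c l m] using l m S'c by simp
    moreover have "ef t0 l * S' $$ (l,m) * em t0 m = cis (pi * (e l - e m)) * S' $$ (l,m)"
      using cisid[OF l m, of t0] unfolding wt by (simp add: mult_ac)
    ultimately show ?thesis by simp
  qed
  have F2: "e l \<in> C \<longleftrightarrow> e m \<in> C"
    if l: "l < n" and m: "m < n" and compat: "\<forall>p q. p < n \<longrightarrow> q < n \<longrightarrow> X' $$ (p,q) \<noteq> 0 \<longrightarrow> (e p \<in> C \<longleftrightarrow> e q \<in> C)"
      and nz: "S' $$ (l,m) \<noteq> 0" for C l m
  proof -
    define g :: "nat \<Rightarrow> complex" where "g = (\<lambda>p. if e p \<in> C then 2 else 1)"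
    define g' :: "nat \<Rightarrow> complex" where "g' = (\<lambda>p. 1 / g p)"
    have gg: "\<forall>p<n. g p * g' p = 1" unfolding g'_def g_def by auto
    have fix1: "diagm n g * X' * diagm n g' = X'"
    proof (rule eq_matI)
      fix p q assume "p < dim_row X'" "q < dim_col X'"
      hence p: "p < n" and q: "q < n" using X'c by auto
      show "(diagm n g * X' * diagm n g') $$ (p,q) = X' $$ (p,q)"
      proof (cases "X' $$ (p,q) = 0")
        case True thus ?thesis unfolding DMD_index[OF X'c p q] by simp
      next
        case False
        hence "g p = g q" using compat p q unfolding g_def by auto
        thus ?thesis unfolding DMD_index[OF X'c p q] g'_def g_def by (auto split: if_splits)
      qed
    qed (use X'c in simp_all)
    have eX: "P * diagm n g * Q * X * (P * diagm n g' * Q) = X"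
      unfolding reassoc fix1 by (rule XPX)
    have "Theta X = P * (diagm n g * S' * diagm n g') * Q" using conj[OF gg] unfolding eX .
    hence "S' = Q * (P * (diagm n g * S' * diagm n g') * Q) * P" unfolding S'_def by simp
    also have "\<dots> = diagm n g * S' * diagm n g'" by (rule sandwich[OF P Q QP]) (rule mult3_carrier[OF diagm_carrier(1) S'c diagm_carrier(1)])
    finally have "S' $$ (l,m) = (diagm n g * S' * diagm n g') $$ (l,m)" by simp
    hence "S' $$ (l,m) = g l * S' $$ (l,m) * g' m" unfolding DMD_index[OF S'c l m] .
    hence "S' $$ (l,m) * (g l * g' m - 1) = 0" by (simp add: algebra_simps)
    hence "g l * g' m = 1" using nz by simp
    hence "g l = g m" unfolding g'_def g_def by (auto split: if_splits)
    thus ?thesis unfolding g_def by (auto split: if_splits)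
  qed
  have eigset: "{c. eigenvalue H c} = d ` {..<n}"
  proof (intro equalityI subsetI)
    fix c assume "c \<in> {c. eigenvalue H c}"
    thus "c \<in> d ` {..<n}" using eigen_in_diag[OF P Q PQ QP HD] by auto
  next
    fix c assume "c \<in> d ` {..<n}"
    thus "c \<in> {c. eigenvalue H c}" using col_eigen[OF P Q QP HD] by auto
  qed
  have cardV: "card (e ` {..<n}) \<le> 3"
  proof -
    have "e ` {..<n} = (\<lambda>c. Re c / (hbar * \<omega>)) ` (d ` {..<n})" unfolding e_def by auto
    hence c1: "card (e ` {..<n}) \<le> card (d ` {..<n})" by (simp add: card_image_le)
    have c2: "card (e ` {..<n}) \<le> n" using card_image_le[of "{..<n}" e] by simp
    show ?thesis using card3 c1 c2 eigset by auto
  qed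
  have keyapp: "S' $$ (l,m) * (\<Sum>k<3::nat. cis (2*pi*real k*(e l - e m)/3)) = (if l = m then 3/2 else 0)"
    if l: "l < n" and m: "m < n" for l m
  proof (rule key[where V = "e ` {..<n}" and isd = "l = m" and W = "{(e p, e q) | p q. p < n \<and> q < n \<and> X' $$ (p,q) \<noteq> 0}"])
    show "finite (e ` {..<n})" by simp
    show "card (e ` {..<n}) \<le> 3" by (rule cardV)
    show "e l \<in> e ` {..<n}" "e m \<in> e ` {..<n}" using l m by auto
    show "{(e p, e q) | p q. p < n \<and> q < n \<and> X' $$ (p,q) \<noteq> 0} \<subseteq> e ` {..<n} \<times> e ` {..<n}" by auto
    show "\<forall>(p,q)\<in>{(e p, e q) | p q. p < n \<and> q < n \<and> X' $$ (p,q) \<noteq> 0}. p - q = 1 \<or> p - q = -1"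
      using F3 by auto
    show "\<forall>C. (\<forall>(p,q)\<in>{(e p, e q) | p q. p < n \<and> q < n \<and> X' $$ (p,q) \<noteq> 0}. p \<in> C \<longleftrightarrow> q \<in> C) \<longrightarrow> S' $$ (l,m) \<noteq> 0 \<longrightarrow> (e l \<in> C \<longleftrightarrow> e m \<in> C)"
    proof (intro allI impI)
      fix C assume c: "\<forall>(p,q)\<in>{(e p, e q) | p q. p < n \<and> q < n \<and> X' $$ (p,q) \<noteq> 0}. p \<in> C \<longleftrightarrow> q \<in> C"
        and nz: "S' $$ (l,m) \<noteq> 0"
      have "\<forall>p q. p < n \<longrightarrow> q < n \<longrightarrow> X' $$ (p,q) \<noteq> 0 \<longrightarrow> (e p \<in> C \<longleftrightarrow> e q \<in> C)"
        using c by blast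
      thus "e l \<in> C \<longleftrightarrow> e m \<in> C" using F2[OF l m _ nz] by blast
    qed
    show "cis (pi * (e l - e m)) * S' $$ (l,m) = (if l = m then 1 else 0) - S' $$ (l,m)" by (rule F1[OF l m])
    show "l = m \<Longrightarrow> e l = e m" by simp
  qed
  define tk where "tk = (\<lambda>k::nat. 2 * pi * real k / (3 * \<omega>))"
  define M where "M = (\<lambda>k. diagm n (ef (tk k)) * S' * diagm n (em (tk k)))"
  have Mc: "M k \<in> carrier_mat n n" for k unfolding M_def by (rule mult3_carrier[OF diagm_carrier(1) S'c diagm_carrier(1)])
  have ThK: "Theta (heis hbar H X (tk k)) = P * M k * Q" for k
    unfolding heisE M_def by (rule conj[OF efem])
  have Ment: "M k $$ (l,m) = cis (2*pi*real k*(e l - e m)/3) * S' $$ (l,m)" if l: "l < n" and m: "m < n" for k l m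
  proof -
    have "M k $$ (l,m) = ef (tk k) l * em (tk k) m * S' $$ (l,m)"
      unfolding M_def DMD_index[OF S'c l m] by (simp add: mult_ac)
    also have "ef (tk k) l * em (tk k) m = cis (2*pi*real k*(e l - e m)/3)"
      unfolding cisid[OF l m] tk_def using om by (simp add: field_simps)
    finally show ?thesis .
  qed
  have Msum: "(\<Sum>k<3::nat. M k $$ (l,m)) = (if l = m then 3/2 else 0)" if l: "l < n" and m: "m < n" for l m
  proof -
    have "(\<Sum>k<3::nat. M k $$ (l,m)) = S' $$ (l,m) * (\<Sum>k<3::nat. cis (2*pi*real k*(e l - e m)/3))"
      unfolding Ment[OF l m] by (simp add: sum_distrib_left mult.commute)
    thus ?thesis using keyapp[OF l m] by simp
  qed
  have Tsum: "(\<Sum>k<3::nat. (P * M k * Q) $$ (i,j)) = (if i = j then 3/2 else 0)" if i: "i < n" and j: "j < n" for i j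
  proof -
    have "(\<Sum>k<3::nat. (P * M k * Q) $$ (i,j)) = (\<Sum>k<3::nat. \<Sum>l<n. \<Sum>m<n. P $$ (i,l) * M k $$ (l,m) * Q $$ (m,j))"
      by (intro sum.cong refl) (rule PMQ_index[OF P Q Mc i j])
    also have "\<dots> = (\<Sum>l<n. \<Sum>k<3::nat. \<Sum>m<n. P $$ (i,l) * M k $$ (l,m) * Q $$ (m,j))"
      by (rule sum.swap)
    also have "\<dots> = (\<Sum>l<n. \<Sum>m<n. \<Sum>k<3::nat. P $$ (i,l) * M k $$ (l,m) * Q $$ (m,j))"
      by (rule sum.cong[OF refl], rule sum.swap)
    also have "\<dots> = (\<Sum>l<n. \<Sum>m<n. P $$ (i,l) * (\<Sum>k<3::nat. M k $$ (l,m)) * Q $$ (m,j))"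
      by (intro sum.cong refl) (simp add: sum_distrib_left sum_distrib_right)
    also have "\<dots> = (\<Sum>l<n. \<Sum>m<n. if l = m then 3/2 * (P $$ (i,l) * Q $$ (l,j)) else 0)"
      by (intro sum.cong refl) (simp add: Msum)
    also have "\<dots> = (\<Sum>l<n. 3/2 * (P $$ (i,l) * Q $$ (l,j)))"
      by (intro sum.cong refl) simp
    also have "\<dots> = 3/2 * (\<Sum>l<n. P $$ (i,l) * Q $$ (l,j))"
      by (simp add: sum_distrib_left)
    also have "(\<Sum>l<n. P $$ (i,l) * Q $$ (l,j)) = (P * Q) $$ (i,j)"
      using P Q i j by (simp add: scalar_prod_def atLeast0LessThan)
    also have "\<dots> = (if i = j then 1 else 0)" using PQ i j by simp
    also have "3/2 * (if i = j then 1 else 0) = (if i = j then 3/2 else (0::complex))" by simp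
    finally show ?thesis .
  qed
  have PMQc: "P * M k * Q \<in> carrier_mat n n" for k by (rule mult3_carrier[OF P Mc Q])
  have "(\<Sum>k<3::nat. mtrace (Theta (heis hbar H X (tk k)) * \<rho>))
      = (\<Sum>k<3::nat. \<Sum>i<n. \<Sum>j<n. (P * M k * Q) $$ (i,j) * \<rho> $$ (j,i))"
    unfolding ThK by (intro sum.cong refl) (rule mtrace_mult[OF PMQc rc])
  also have "\<dots> = (\<Sum>i<n. \<Sum>k<3::nat. \<Sum>j<n. (P * M k * Q) $$ (i,j) * \<rho> $$ (j,i))"
    by (rule sum.swap)
  also have "\<dots> = (\<Sum>i<n. \<Sum>j<n. \<Sum>k<3::nat. (P * M k * Q) $$ (i,j) * \<rho> $$ (j,i))"
    by (rule sum.cong[OF refl], rule sum.swap)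
  also have "\<dots> = (\<Sum>i<n. \<Sum>j<n. (\<Sum>k<3::nat. (P * M k * Q) $$ (i,j)) * \<rho> $$ (j,i))"
    by (intro sum.cong refl) (simp add: sum_distrib_right)
  also have "\<dots> = (\<Sum>i<n. \<Sum>j<n. if i = j then 3/2 * \<rho> $$ (i,i) else 0)"
    by (intro sum.cong refl) (simp add: Tsum)
  also have "\<dots> = (\<Sum>i<n. 3/2 * \<rho> $$ (i,i))"
    by (intro sum.cong refl) simp
  also have "\<dots> = 3/2 * mtrace \<rho>" using rc unfolding mtrace_def by (simp add: sum_distrib_left)
  finally have "(\<Sum>k<3::nat. mtrace (Theta (heis hbar H X (tk k)) * \<rho>)) = 3/2" using tr by simp
  thus ?thesis unfolding tk_def by simp
qed


end
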